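(* Let $0<c_1<1/4$. There exists $N_0=N_0(c_1,\rho,b,d)>0$ such that for every $\varepsilon\in(0,1)$ and every integer $N$ with $N_0\le N\le|\log\varepsilon|^{\frac1{2c_1}}$, for all $E\in\mathbb R$ and $\vec\omega\in[0,2\pi]^b$ there is a set $\mathbf X_N=\mathbf X_N(E,\vec\omega)\subset\mathbb R^d$ such that $$\sup_{1\le j\le d,\ \Theta_j^\neg\in\mathbb R^{d-1}}\mathrm{mes}\big(\mathbf X_N(\Theta_j^\neg)\big)\le e^{-N^{c_1}},$$ and for all $\Theta\notin\mathbf X_N$ and $Q\in\mathcal E_N^0$, $$\|G_Q(E;\Theta)\|\le e^{\sqrt N},\qquad |G_Q(E;\Theta)(\mathbf n,\mathbf n')|\le e^{-\frac{4\rho}{5}|\mathbf n-\mathbf n'|}\ \text{ for }|\mathbf n-\mathbf n'|\ge N/10.$$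
   Context: Standing setup: $d\ge1$, $b_i\in\mathbb N$, $b=\sum_{i=1}^db_i>d$; $\rho\in(0,1)$; $V:\mathbb T^b\to\mathbb R$ real analytic with mean zero and $|\widehat V_{\mathbf k}|\le e^{-\rho|\mathbf k|}$, $|\cdot|$ the sup norm. For $\varepsilon>0$, $\vec\omega=(\vec\omega_1,\dots,\vec\omega_d)\in[0,2\pi]^b$, $\Theta\in\mathbb R^d$: $(h(\Theta)Z)_{\mathbf k}=\sum_{\mathbf k'\in\mathbb Z^b}\varepsilon\widehat V_{\mathbf k-\mathbf k'}Z_{\mathbf k'}+\sum_{i=1}^d(\Theta_i+\mathbf k_i\cdot\vec\omega_i)^2Z_{\mathbf k}$; for finite $\Lambda\subset\mathbb Z^b$, $G_\Lambda(E;\Theta)=(R_\Lambda h(\Theta)R_\Lambda-E)^{-1}$. An elementary region of size $N$ centered at $0$ is either $[-N,N]^b\cap\mathbb Z^b$ or $[-N,N]^b\cap\mathbb Z^b\setminus\{\mathbf k: k_{ij}\in\varsigma_{ij}\ \forall i,j\}$ with each $\varsigma_{ij}\in\{\{n<0\},\{n>0\},\emptyset\}$ and at least two nonempty; $\mathcal E_N^0$ denotes the set of these. $\Theta_j^\neg$ is $\Theta$ with the $j$-th coordinate removed, $X(\Theta_j^\neg)=\{\Theta_j:(\Theta_j,\Theta_j^\neg)\in X\}$. *)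

theory Defs
  imports "HOL-Analysis.Analysis"
begin

text \<open>Lattice points of Z^b are indexed by pairs (i,j) with i < d, j < b_i;
  a point is a function on pairs that vanishes outside this index set.\<close>

type_synonym lat = "nat \<times> nat \<Rightarrow> int"

definition idx :: "nat \<Rightarrow> (nat \<Rightarrow> nat) \<Rightarrow> (nat \<times> nat) set" where
  "idx d bs = {(i, j). i < d \<and> j < bs i}"

definition lattice :: "nat \<Rightarrow> (nat \<Rightarrow> nat) \<Rightarrow> lat set" where
  "lattice d bs = {k. \<forall>p. p \<notin> idx d bs \<longrightarrow> k p = 0}"

definition supnorm :: "nat \<Rightarrow> (nat \<Rightarrow> nat) \<Rightarrow> lat \<Rightarrow> int" where
  "supnorm d bs k = Max ((\<lambda>p. \<bar>k p\<bar>) ` idx d bs)"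

definition lat_diff :: "lat \<Rightarrow> lat \<Rightarrow> lat" where
  "lat_diff k k' = (\<lambda>p. k p - k' p)"

text \<open>Fourier coefficients of a real-valued, mean-zero V on T^b with
  |V_k| <= exp(-rho |k|).\<close>
definition admissible_V :: "nat \<Rightarrow> (nat \<Rightarrow> nat) \<Rightarrow> real \<Rightarrow> (lat \<Rightarrow> complex) \<Rightarrow> bool" where
  "admissible_V d bs \<rho> Vh \<longleftrightarrow>
     Vh (\<lambda>_. 0) = 0 \<and>
     (\<forall>k\<in>lattice d bs. Vh (\<lambda>p. - k p) = cnj (Vh k)) \<and>
     (\<forall>k\<in>lattice d bs. norm (Vh k) \<le> exp (- \<rho> * real_of_int (supnorm d bs k)))"

text \<open>R^d as functions nat => real vanishing from index d on.\<close>
definition Rd :: "nat \<Rightarrow> (nat \<Rightarrow> real) set" where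
  "Rd d = {\<theta>. \<forall>i. d \<le> i \<longrightarrow> \<theta> i = 0}"

text \<open>Section X(Theta_j^neg) of X in direction j\<close>
definition slice :: "(nat \<Rightarrow> real) set \<Rightarrow> nat \<Rightarrow> (nat \<Rightarrow> real) \<Rightarrow> real set" where
  "slice X j \<theta> = {t. \<theta>(j := t) \<in> X}"

text \<open>Matrix entries of R_Q (h(Theta) - E) R_Q, indices n, n' in Q.\<close>
definition hmat :: "nat \<Rightarrow> (nat \<Rightarrow> nat) \<Rightarrow> (lat \<Rightarrow> complex) \<Rightarrow> real \<Rightarrow>
     ((nat \<times> nat) \<Rightarrow> real) \<Rightarrow> (nat \<Rightarrow> real) \<Rightarrow> real \<Rightarrow> lat \<Rightarrow> lat \<Rightarrow> complex" where
  "hmat d bs Vh \<epsilon> \<omega> \<theta> E n n' =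
     complex_of_real \<epsilon> * Vh (lat_diff n n') +
     (if n = n' then complex_of_real
        ((\<Sum>i<d. (\<theta> i + (\<Sum>j<bs i. real_of_int (n (i, j)) * \<omega> (i, j)))\<^sup>2) - E)
      else 0)"

definition is_inverse_on :: "lat set \<Rightarrow> (lat \<Rightarrow> lat \<Rightarrow> complex) \<Rightarrow> (lat \<Rightarrow> lat \<Rightarrow> complex) \<Rightarrow> bool" where
  "is_inverse_on Q A G \<longleftrightarrow>
     (\<forall>n\<in>Q. \<forall>m\<in>Q. (\<Sum>k\<in>Q. A n k * G k m) = (if n = m then 1 else 0)) \<and>
     (\<forall>n\<in>Q. \<forall>m\<in>Q. (\<Sum>k\<in>Q. G n k * A k m) = (if n = m then 1 else 0))"

definition invertible_on :: "lat set \<Rightarrow> (lat \<Rightarrow> lat \<Rightarrow> complex) \<Rightarrow> bool" where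
  "invertible_on Q A \<longleftrightarrow> (\<exists>G. is_inverse_on Q A G)"

definition inv_on :: "lat set \<Rightarrow> (lat \<Rightarrow> lat \<Rightarrow> complex) \<Rightarrow> lat \<Rightarrow> lat \<Rightarrow> complex" where
  "inv_on Q A = (SOME G. is_inverse_on Q A G)"

definition green :: "nat \<Rightarrow> (nat \<Rightarrow> nat) \<Rightarrow> (lat \<Rightarrow> complex) \<Rightarrow> real \<Rightarrow>
     ((nat \<times> nat) \<Rightarrow> real) \<Rightarrow> lat set \<Rightarrow> real \<Rightarrow> (nat \<Rightarrow> real) \<Rightarrow> lat \<Rightarrow> lat \<Rightarrow> complex" where
  "green d bs Vh \<epsilon> \<omega> Q E \<theta> = inv_on Q (hmat d bs Vh \<epsilon> \<omega> \<theta> E)"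

definition l2norm :: "lat set \<Rightarrow> (lat \<Rightarrow> complex) \<Rightarrow> real" where
  "l2norm Q u = sqrt (\<Sum>m\<in>Q. (cmod (u m))\<^sup>2)"

definition opnorm :: "lat set \<Rightarrow> (lat \<Rightarrow> lat \<Rightarrow> complex) \<Rightarrow> real" where
  "opnorm Q G = (SUP u\<in>{u. l2norm Q u \<le> 1}. l2norm Q (\<lambda>n. \<Sum>m\<in>Q. G n m * u m))"

text \<open>Elementary regions of size N centred at 0. A sign pattern s assigns to each
  (i,j) the constraint varsigma_ij: -1 = {n<0}, 1 = {n>0}, 0 = empty (no constraint).\<close>
definition cube :: "nat \<Rightarrow> (nat \<Rightarrow> nat) \<Rightarrow> nat \<Rightarrow> lat set" where
  "cube d bs N = {k \<in> lattice d bs. \<forall>p\<in>idx d bs. \<bar>k p\<bar> \<le> int N}"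

definition elem_regions :: "nat \<Rightarrow> (nat \<Rightarrow> nat) \<Rightarrow> nat \<Rightarrow> lat set set" where
  "elem_regions d bs N =
     {cube d bs N} \<union>
     {cube d bs N - {k. \<forall>p\<in>idx d bs. s p \<noteq> 0 \<longrightarrow> sgn (k p) = s p} | s.
        (\<forall>p\<in>idx d bs. s p \<in> {-1, 0, 1}) \<and>
        (\<exists>p\<in>idx d bs. \<exists>q\<in>idx d bs. p \<noteq> q \<and> s p \<noteq> 0 \<and> s q \<noteq> 0)}"

end

theory Submission
  imports Defs "Jordan_Normal_Form.Determinant" "HOL-Real_Asymp.Real_Asymp"
begin


lemma asymp_N0:
  fixes c :: real and B :: nat
  assumes "c > 0"
  shows "\<exists>N0>0. \<forall>x\<ge>N0. ln 4 + 2 * real B * ln (2*x+1) \<le> x powr c / 2 \<and> 20 \<le> x powr c"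
proof -
  have "eventually (\<lambda>x. ln 4 + 2 * real B * ln (2*x+1) \<le> x powr c / 2) at_top"
    using assms by real_asymp
  moreover have "eventually (\<lambda>x. 20 \<le> x powr c) at_top"
    using assms by real_asymp
  ultimately have "eventually (\<lambda>x. ln 4 + 2 * real B * ln (2*x+1) \<le> x powr c / 2 \<and> 20 \<le> x powr c) at_top"
    by (rule eventually_conj)
  then obtain N where N: "\<forall>x\<ge>N. ln 4 + 2 * real B * ln (2*x+1) \<le> x powr c / 2 \<and> 20 \<le> x powr c"
    by (auto simp: eventually_at_top_linorder)
  show ?thesis by (rule exI[of _ "max N 1"]) (use N in auto)
qed

lemma invertible_from_inj:
  fixes M :: "lat \<Rightarrow> lat \<Rightarrow> complex"
  assumes fin: "finite Q"
    and inj: "\<And>x. (\<forall>n\<in>Q. (\<Sum>k\<in>Q. M n k * x k) = 0) \<Longrightarrow> (\<forall>n\<in>Q. x n = 0)"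
  shows "invertible_on Q M"
proof -
  define m where "m = card Q"
  obtain f where f: "bij_betw f {0..<m} Q" using ex_bij_betw_nat_finite[OF fin] m_def by blast
  define g where "g = inv_into {0..<m} f"
  have fg: "\<And>k. k \<in> Q \<Longrightarrow> f (g k) = k" using f unfolding g_def by (simp add: bij_betw_inv_into_right)
  have gQ: "\<And>k. k \<in> Q \<Longrightarrow> g k < m" using f unfolding g_def
    by (metis atLeastLessThan_iff bij_betw_def inv_into_into)
  have gf: "\<And>i. i < m \<Longrightarrow> g (f i) = i" using f unfolding g_def
    by (simp add: bij_betw_inv_into_left)
  have fQ: "\<And>i. i < m \<Longrightarrow> f i \<in> Q" using f by (auto simp: bij_betw_def)
  have reidx: "\<And>h::lat\<Rightarrow>complex. (\<Sum>k\<in>Q. h k) = (\<Sum>j<m. h (f j))"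
  proof -
    fix h :: "lat \<Rightarrow> complex"
    have "(\<Sum>j\<in>{0..<m}. h (f j)) = (\<Sum>k\<in>Q. h k)"
      using sum.reindex_bij_betw[OF f] by blast
    then show "(\<Sum>k\<in>Q. h k) = (\<Sum>j<m. h (f j))" by (simp add: atLeast0LessThan)
  qed
  define A where "A = mat m m (\<lambda>(i,j). M (f i) (f j))"
  have A: "A \<in> carrier_mat m m" unfolding A_def by simp
  have "det A \<noteq> 0"
  proof
    assume "det A = 0"
    then obtain v where v: "v \<in> carrier_vec m" "v \<noteq> 0\<^sub>v m" "A *\<^sub>v v = 0\<^sub>v m"
      using det_0_iff_vec_prod_zero[OF A] by blast
    define x where "x k = v $ (g k)" for k
    have "\<forall>n\<in>Q. (\<Sum>k\<in>Q. M n k * x k) = 0"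
    proof
      fix n assume n: "n \<in> Q"
      have "(A *\<^sub>v v) $ g n = 0" using v gQ[OF n] by simp
      moreover have "(A *\<^sub>v v) $ g n = (\<Sum>j<m. M n (f j) * v $ j)"
        using v(1) gQ[OF n] fg[OF n] unfolding A_def
        by (auto simp: mult_mat_vec_def row_def scalar_prod_def atLeast0LessThan intro!: sum.cong)
      moreover have "(\<Sum>k\<in>Q. M n k * x k) = (\<Sum>j<m. M n (f j) * v $ j)"
        unfolding reidx x_def using gf by simp
      ultimately show "(\<Sum>k\<in>Q. M n k * x k) = 0" by simp
    qed
    then have "\<forall>n\<in>Q. x n = 0" by (rule inj)
    then have "v = 0\<^sub>v m" using v(1) fQ gf unfolding x_def
      by (intro eq_vecI) (auto, metis)
    with v(2) show False by simp
  qed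
  then have "A \<in> Units (ring_mat TYPE(complex) m ())" by (rule det_non_zero_imp_unit[OF A])
  then obtain B where B: "B \<in> carrier_mat m m" "A * B = 1\<^sub>m m" "B * A = 1\<^sub>m m"
    using A by (auto simp: Units_def ring_mat_def)
  define G where "G p q = B $$ (g p, g q)" for p q
  have AB: "\<And>i l. i < m \<Longrightarrow> l < m \<Longrightarrow> (\<Sum>j<m. A $$ (i,j) * B $$ (j,l)) = (if i = l then 1 else 0)"
  proof -
    fix i l assume il: "i < m" "l < m"
    have "(A * B) $$ (i,l) = (\<Sum>j<m. A $$ (i,j) * B $$ (j,l))"
      using A B(1) il by (auto simp: times_mat_def scalar_prod_def row_def col_def atLeast0LessThan intro!: sum.cong)
    then show "(\<Sum>j<m. A $$ (i,j) * B $$ (j,l)) = (if i = l then 1 else 0)" using B(2) il by simp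
  qed
  have BA: "\<And>i l. i < m \<Longrightarrow> l < m \<Longrightarrow> (\<Sum>j<m. B $$ (i,j) * A $$ (j,l)) = (if i = l then 1 else 0)"
  proof -
    fix i l assume il: "i < m" "l < m"
    have "(B * A) $$ (i,l) = (\<Sum>j<m. B $$ (i,j) * A $$ (j,l))"
      using A B(1) il by (auto simp: times_mat_def scalar_prod_def row_def col_def atLeast0LessThan intro!: sum.cong)
    then show "(\<Sum>j<m. B $$ (i,j) * A $$ (j,l)) = (if i = l then 1 else 0)" using B(3) il by simp
  qed
  have "is_inverse_on Q M G"
    unfolding is_inverse_on_def
  proof (intro conjI ballI)
    fix n q assume n: "n \<in> Q" and q: "q \<in> Q"
    have "(\<Sum>k\<in>Q. M n k * G k q) = (\<Sum>j<m. A $$ (g n, j) * B $$ (j, g q))"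
      unfolding reidx G_def A_def using gQ[OF n] fg[OF n] gf by (auto intro!: sum.cong)
    also have "\<dots> = (if n = q then 1 else 0)" using AB[OF gQ[OF n] gQ[OF q]] fg n q by metis
    finally show "(\<Sum>k\<in>Q. M n k * G k q) = (if n = q then 1 else 0)" .
    have "(\<Sum>k\<in>Q. G n k * M k q) = (\<Sum>j<m. B $$ (g n, j) * A $$ (j, g q))"
      unfolding reidx G_def A_def using gQ[OF q] fg[OF q] gf by (auto intro!: sum.cong)
    also have "\<dots> = (if n = q then 1 else 0)" using BA[OF gQ[OF n] gQ[OF q]] fg n q by metis
    finally show "(\<Sum>k\<in>Q. G n k * M k q) = (if n = q then 1 else 0)" .
  qed
  then show ?thesis unfolding invertible_on_def by blast
qed


lemma key_ineq:
  fixes Q :: "lat set" and A :: "lat \<Rightarrow> lat \<Rightarrow> complex" and Dg w :: "lat \<Rightarrow> real"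
    and x z :: "lat \<Rightarrow> complex"
  assumes fin: "finite Q" and n: "n \<in> Q" and dn: "\<delta> \<le> \<bar>Dg n\<bar>" and eps: "\<epsilon> \<ge> 0"
    and wn: "w n \<ge> 0"
    and wA: "\<forall>k\<in>Q. w n * cmod (A n k) \<le> w k"
    and Y: "\<forall>k\<in>Q. w k * cmod (x k) \<le> Y"
    and eq: "(\<Sum>k\<in>Q. (complex_of_real \<epsilon> * A n k + (if n = k then complex_of_real (Dg n) else 0)) * x k) = z n"
  shows "\<delta> * (w n * cmod (x n)) \<le> w n * cmod (z n) + \<epsilon> * real (card Q) * Y"
proof -
  define S where "S = (\<Sum>k\<in>Q. A n k * x k)"
  have "(\<Sum>k\<in>Q. (complex_of_real \<epsilon> * A n k + (if n = k then complex_of_real (Dg n) else 0)) * x k)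
      = complex_of_real \<epsilon> * S + complex_of_real (Dg n) * x n"
  proof -
    have "(\<Sum>k\<in>Q. (complex_of_real \<epsilon> * A n k + (if n = k then complex_of_real (Dg n) else 0)) * x k)
      = (\<Sum>k\<in>Q. complex_of_real \<epsilon> * (A n k * x k) + (if n = k then complex_of_real (Dg n) * x n else 0))"
      by (intro sum.cong) (auto simp: algebra_simps)
    also have "\<dots> = complex_of_real \<epsilon> * S + complex_of_real (Dg n) * x n"
      using fin n by (simp add: sum.distrib sum_distrib_left S_def)
    finally show ?thesis .
  qed
  with eq have e2: "complex_of_real (Dg n) * x n = z n - complex_of_real \<epsilon> * S"
    by (metis add_diff_cancel_left')
  have cS: "w n * cmod S \<le> (\<Sum>k\<in>Q. w k * cmod (x k))"
  proof -
    have "w n * cmod S \<le> w n * (\<Sum>k\<in>Q. cmod (A n k) * cmod (x k))"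
      unfolding S_def using wn
      by (intro mult_left_mono) (auto intro: order_trans[OF norm_sum] simp: norm_mult)
    also have "\<dots> = (\<Sum>k\<in>Q. (w n * cmod (A n k)) * cmod (x k))"
      by (simp add: sum_distrib_left mult.assoc)
    also have "\<dots> \<le> (\<Sum>k\<in>Q. w k * cmod (x k))"
      using wA by (intro sum_mono mult_right_mono) auto
    finally show ?thesis .
  qed
  also have "\<dots> \<le> (\<Sum>k\<in>Q. Y)" using Y by (intro sum_mono) auto
  also have "\<dots> = real (card Q) * Y" by simp
  finally have cS2: "w n * cmod S \<le> real (card Q) * Y" .
  have "\<bar>Dg n\<bar> * cmod (x n) \<le> cmod (z n) + \<epsilon> * cmod S"
  proof -
    have "\<bar>Dg n\<bar> * cmod (x n) = cmod (z n - complex_of_real \<epsilon> * S)"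
      using e2[symmetric] by (simp add: norm_mult)
    also have "\<dots> \<le> cmod (z n) + \<epsilon> * cmod S"
      using eps by (metis abs_of_nonneg norm_mult norm_of_real norm_triangle_ineq4)
    finally show ?thesis .
  qed
  then have "w n * (\<bar>Dg n\<bar> * cmod (x n)) \<le> w n * (cmod (z n) + \<epsilon> * cmod S)"
    using wn by (rule mult_left_mono)
  also have "\<dots> = w n * cmod (z n) + \<epsilon> * (w n * cmod S)" by (simp add: algebra_simps)
  also have "\<dots> \<le> w n * cmod (z n) + \<epsilon> * (real (card Q) * Y)"
    using cS2 eps by (intro add_left_mono mult_left_mono) auto
  finally have r: "w n * (\<bar>Dg n\<bar> * cmod (x n)) \<le> w n * cmod (z n) + \<epsilon> * real (card Q) * Y"
    by (simp add: mult.assoc)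
  have "\<delta> * (w n * cmod (x n)) \<le> \<bar>Dg n\<bar> * (w n * cmod (x n))"
    using dn wn by (intro mult_right_mono) auto
  also have "\<dots> = w n * (\<bar>Dg n\<bar> * cmod (x n))" by simp
  finally show ?thesis using r by linarith
qed

lemma gen_bound:
  fixes Q :: "lat set" and A :: "lat \<Rightarrow> lat \<Rightarrow> complex" and Dg w :: "lat \<Rightarrow> real"
    and x z :: "lat \<Rightarrow> complex"
  assumes fin: "finite Q" and ne: "Q \<noteq> {}" and dpos: "\<delta> > 0" and eps: "\<epsilon> \<ge> 0"
    and small: "\<epsilon> * real (card Q) \<le> \<delta> / 2"
    and dg: "\<forall>n\<in>Q. \<delta> \<le> \<bar>Dg n\<bar>"
    and wpos: "\<forall>n\<in>Q. w n \<ge> 0"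
    and wA: "\<forall>n\<in>Q. \<forall>k\<in>Q. w n * cmod (A n k) \<le> w k"
    and Z: "\<forall>n\<in>Q. w n * cmod (z n) \<le> Z"
    and eq: "\<forall>n\<in>Q. (\<Sum>k\<in>Q. (complex_of_real \<epsilon> * A n k + (if n = k then complex_of_real (Dg n) else 0)) * x k) = z n"
  shows "\<forall>n\<in>Q. w n * cmod (x n) \<le> 2 * Z / \<delta>"
    and "\<forall>n\<in>Q. \<delta> * (w n * cmod (x n)) \<le> w n * cmod (z n) + \<epsilon> * real (card Q) * (2 * Z / \<delta>)"
proof -
  define Y where "Y = Max ((\<lambda>k. w k * cmod (x k)) ` Q)"
  have Yge: "\<forall>k\<in>Q. w k * cmod (x k) \<le> Y" unfolding Y_def using fin by auto
  obtain k0 where k0: "k0 \<in> Q" "Y = w k0 * cmod (x k0)"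
    unfolding Y_def using fin ne by (metis (no_types, lifting) Max_in finite_imageI image_iff image_is_empty)
  have Y0: "Y \<ge> 0" using k0 wpos by auto
  have "\<delta> * Y \<le> w k0 * cmod (z k0) + \<epsilon> * real (card Q) * Y"
    using key_ineq[OF fin k0(1) _ eps _ _ Yge, where Dg=Dg and A=A and z=z] k0 dg wpos wA eq by auto
  also have "\<dots> \<le> Z + \<delta> / 2 * Y" using Z k0(1) small Y0 by (intro add_mono mult_right_mono) auto
  finally have "\<delta> / 2 * Y \<le> Z" by simp
  then have Yb: "Y \<le> 2 * Z / \<delta>" using dpos by (simp add: field_simps)
  show 1: "\<forall>n\<in>Q. w n * cmod (x n) \<le> 2 * Z / \<delta>" using Yge Yb by force
  show "\<forall>n\<in>Q. \<delta> * (w n * cmod (x n)) \<le> w n * cmod (z n) + \<epsilon> * real (card Q) * (2 * Z / \<delta>)"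
  proof
    fix n assume n: "n \<in> Q"
    show "\<delta> * (w n * cmod (x n)) \<le> w n * cmod (z n) + \<epsilon> * real (card Q) * (2 * Z / \<delta>)"
      using key_ineq[OF fin n _ eps _ _ 1, where Dg=Dg and A=A and z=z] n dg wpos wA eq by auto
  qed
qed


lemma idx_finite: "finite (idx d bs)"
proof -
  have "idx d bs = Sigma {..<d} (\<lambda>i. {..<bs i})" unfolding idx_def by auto
  then show ?thesis by simp
qed

lemma idx_ne: "d \<ge> 1 \<Longrightarrow> bs 0 \<ge> 1 \<Longrightarrow> idx d bs \<noteq> {}"
  unfolding idx_def by force

lemma supnorm_ge: "p \<in> idx d bs \<Longrightarrow> \<bar>k p\<bar> \<le> supnorm d bs k"
  unfolding supnorm_def using idx_finite by auto

lemma supnorm_nonneg: "idx d bs \<noteq> {} \<Longrightarrow> supnorm d bs k \<ge> 0"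
  using supnorm_ge[of _ d bs k] by fastforce

lemma supnorm_tri:
  assumes "idx d bs \<noteq> {}"
  shows "supnorm d bs (lat_diff a c) \<le> supnorm d bs (lat_diff a b) + supnorm d bs (lat_diff b c)"
  unfolding supnorm_def[of d bs "lat_diff a c"]
proof (subst Max_le_iff)
  show "finite ((\<lambda>p. \<bar>lat_diff a c p\<bar>) ` idx d bs)" using idx_finite by auto
  show "(\<lambda>p. \<bar>lat_diff a c p\<bar>) ` idx d bs \<noteq> {}" using assms by auto
  show "\<forall>x\<in>(\<lambda>p. \<bar>lat_diff a c p\<bar>) ` idx d bs. x \<le> supnorm d bs (lat_diff a b) + supnorm d bs (lat_diff b c)"
  proof
    fix x assume "x \<in> (\<lambda>p. \<bar>lat_diff a c p\<bar>) ` idx d bs"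
    then obtain p where p: "p \<in> idx d bs" "x = \<bar>lat_diff a c p\<bar>" by auto
    have "x \<le> \<bar>lat_diff a b p\<bar> + \<bar>lat_diff b c p\<bar>" using p unfolding lat_diff_def by auto
    also have "\<dots> \<le> supnorm d bs (lat_diff a b) + supnorm d bs (lat_diff b c)"
      using supnorm_ge[OF p(1)] by (intro add_mono) auto
    finally show "x \<le> supnorm d bs (lat_diff a b) + supnorm d bs (lat_diff b c)" .
  qed
qed

lemma supnorm_self: "idx d bs \<noteq> {} \<Longrightarrow> supnorm d bs (lat_diff n n) = 0"
  unfolding supnorm_def lat_diff_def using idx_finite by simp

lemma lat_diff_lattice: "a \<in> Defs.lattice d bs \<Longrightarrow> b \<in> Defs.lattice d bs \<Longrightarrow> lat_diff a b \<in> Defs.lattice d bs"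
  unfolding Defs.lattice_def lat_diff_def by auto

lemma lat_diff_eq0: "idx d bs \<noteq> {} \<Longrightarrow> supnorm d bs (lat_diff a b) \<noteq> 0 \<Longrightarrow> a \<noteq> b"
  using supnorm_self by metis

lemma cube_card:
  shows "finite (cube d bs N)" and "real (card (cube d bs N)) \<le> (2 * real N + 1) ^ card (idx d bs)"
proof -
  let ?I = "idx d bs"
  let ?P = "PiE ?I (\<lambda>_. {- int N..int N})"
  have inj: "inj_on (\<lambda>k. restrict k ?I) (cube d bs N)"
  proof
    fix a b assume a: "a \<in> cube d bs N" and b: "b \<in> cube d bs N" and e: "restrict a ?I = restrict b ?I"
    show "a = b"
    proof
      fix p show "a p = b p"
      proof (cases "p \<in> ?I")
        case True then show ?thesis using e by (metis restrict_apply')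
      next
        case False then show ?thesis using a b unfolding cube_def Defs.lattice_def by (cases p) auto
      qed
    qed
  qed
  have sub: "(\<lambda>k. restrict k ?I) ` cube d bs N \<subseteq> ?P"
    unfolding cube_def by (auto simp: abs_le_iff)
  have finP: "finite ?P" using idx_finite by (intro finite_PiE) auto
  show "finite (cube d bs N)"
    using finite_imageD[OF finite_subset[OF sub finP] inj] .
  have "card (cube d bs N) \<le> card ?P" by (rule card_inj_on_le[OF inj sub finP])
  also have "card ?P = (2 * N + 1) ^ card ?I"
  proof -
    have "nat (2 * int N + 1) = 2 * N + 1" by simp
    then show ?thesis using idx_finite by (simp add: card_PiE)
  qed
  finally have "card (cube d bs N) \<le> (2 * N + 1) ^ card ?I" .
  then have "real (card (cube d bs N)) \<le> real ((2 * N + 1) ^ card ?I)" by linarith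
  then show "real (card (cube d bs N)) \<le> (2 * real N + 1) ^ card ?I" by (simp add: add.commute)
qed

lemma elem_sub_cube: "Q \<in> elem_regions d bs N \<Longrightarrow> Q \<subseteq> cube d bs N"
  unfolding elem_regions_def by auto


lemma quad_set:
  fixes a c \<delta> t :: real
  assumes dpos: "\<delta> > 0" and h: "\<bar>(t + a)\<^sup>2 - c\<bar> < \<delta>"
  shows "t \<in> {sqrt (max c 0) - sqrt \<delta> - a <..< sqrt (max c 0) + sqrt \<delta> - a}
             \<union> {- sqrt (max c 0) - sqrt \<delta> - a <..< - sqrt (max c 0) + sqrt \<delta> - a}"
proof -
  define u where "u = t + a"
  define s where "s = sqrt (max c 0)"
  have s0: "s \<ge> 0" unfolding s_def by simp
  have key: "\<bar>\<bar>u\<bar> - s\<bar> < sqrt \<delta>"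
  proof (cases "c \<ge> 0")
    case True
    then have ss: "s\<^sup>2 = c" unfolding s_def by simp
    show ?thesis
    proof (rule ccontr)
      assume "\<not> \<bar>\<bar>u\<bar> - s\<bar> < sqrt \<delta>"
      then have g: "sqrt \<delta> \<le> \<bar>\<bar>u\<bar> - s\<bar>" by simp
      have g2: "sqrt \<delta> \<le> \<bar>u\<bar> + s" using g s0 by linarith
      have "sqrt \<delta> * sqrt \<delta> \<le> \<bar>\<bar>u\<bar> - s\<bar> * (\<bar>u\<bar> + s)"
        using g g2 dpos by (intro mult_mono) auto
      also have "\<dots> = \<bar>(\<bar>u\<bar> - s) * (\<bar>u\<bar> + s)\<bar>" using s0 by (simp add: abs_mult)
      also have "(\<bar>u\<bar> - s) * (\<bar>u\<bar> + s) = u\<^sup>2 - c" using ss by (simp add: algebra_simps power2_eq_square)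
      finally have "\<delta> \<le> \<bar>u\<^sup>2 - c\<bar>" using dpos by simp
      with h show False unfolding u_def by simp
    qed
  next
    case False
    then have "s = 0" unfolding s_def by simp
    moreover have "u\<^sup>2 < \<delta>" using h False unfolding u_def by auto
    then have "\<bar>u\<bar> < sqrt \<delta>" by (metis real_sqrt_abs real_sqrt_less_mono) 
    ultimately show ?thesis by simp
  qed
  show ?thesis using key unfolding u_def s_def[symmetric] by (cases "t + a \<ge> 0") auto
qed


definition Dn :: "nat \<Rightarrow> (nat \<Rightarrow> nat) \<Rightarrow> ((nat \<times> nat) \<Rightarrow> real) \<Rightarrow> real \<Rightarrow> (nat \<Rightarrow> real) \<Rightarrow> lat \<Rightarrow> real" where
  "Dn d bs \<omega> E \<theta> n = (\<Sum>i<d. (\<theta> i + (\<Sum>j<bs i. real_of_int (n (i, j)) * \<omega> (i, j)))\<^sup>2) - E"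

definition badset :: "nat \<Rightarrow> (nat \<Rightarrow> nat) \<Rightarrow> ((nat \<times> nat) \<Rightarrow> real) \<Rightarrow> real \<Rightarrow> nat \<Rightarrow> real \<Rightarrow> (nat \<Rightarrow> real) set" where
  "badset d bs \<omega> E N \<delta> = {\<theta> \<in> Rd d. \<exists>n\<in>cube d bs N. \<bar>Dn d bs \<omega> E \<theta> n\<bar> < \<delta>}"

lemma Dn_upd:
  assumes j: "j < d"
  shows "Dn d bs \<omega> E (\<theta>(j := t)) n =
    (t + (\<Sum>l<bs j. real_of_int (n (j, l)) * \<omega> (j, l)))\<^sup>2 -
    (E - (\<Sum>i\<in>{..<d} - {j}. (\<theta> i + (\<Sum>l<bs i. real_of_int (n (i, l)) * \<omega> (i, l)))\<^sup>2))"
proof -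
  have "(\<Sum>i<d. ((\<theta>(j := t)) i + (\<Sum>l<bs i. real_of_int (n (i, l)) * \<omega> (i, l)))\<^sup>2)
     = ((\<theta>(j := t)) j + (\<Sum>l<bs j. real_of_int (n (j, l)) * \<omega> (j, l)))\<^sup>2
       + (\<Sum>i\<in>{..<d} - {j}. ((\<theta>(j := t)) i + (\<Sum>l<bs i. real_of_int (n (i, l)) * \<omega> (i, l)))\<^sup>2)"
    using j by (subst sum.remove[of _ j]) auto
  also have "(\<Sum>i\<in>{..<d} - {j}. ((\<theta>(j := t)) i + (\<Sum>l<bs i. real_of_int (n (i, l)) * \<omega> (i, l)))\<^sup>2)
     = (\<Sum>i\<in>{..<d} - {j}. (\<theta> i + (\<Sum>l<bs i. real_of_int (n (i, l)) * \<omega> (i, l)))\<^sup>2)"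
    by (intro sum.cong) auto
  finally show ?thesis unfolding Dn_def by simp
qed

lemma slice_bad:
  assumes dpos: "\<delta> > 0" and j: "j < d" and th: "\<theta> \<in> Rd d"
  shows "slice (badset d bs \<omega> E N \<delta>) j \<theta> \<in> sets lebesgue"
    and "emeasure lebesgue (slice (badset d bs \<omega> E N \<delta>) j \<theta>)
           \<le> ennreal (real (card (cube d bs N)) * (4 * sqrt \<delta>))"
proof -
  let ?C = "cube d bs N"
  define a where "a n = (\<Sum>l<bs j. real_of_int (n (j, l)) * \<omega> (j, l))" for n :: lat
  define c where "c n = E - (\<Sum>i\<in>{..<d} - {j}. (\<theta> i + (\<Sum>l<bs i. real_of_int (n (i, l)) * \<omega> (i, l)))\<^sup>2)" for n :: lat
  have thR: "\<theta>(j := t) \<in> Rd d" for t using th j unfolding Rd_def by auto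
  have eq: "slice (badset d bs \<omega> E N \<delta>) j \<theta> = (\<Union>n\<in>?C. {t. \<bar>(t + a n)\<^sup>2 - c n\<bar> < \<delta>})"
    unfolding slice_def badset_def using thR Dn_upd[OF j] a_def c_def by auto
  have op: "open (slice (badset d bs \<omega> E N \<delta>) j \<theta>)"
    unfolding eq by (intro open_UN ballI open_Collect_less continuous_intros)
  then have bor: "slice (badset d bs \<omega> E N \<delta>) j \<theta> \<in> sets borel" by simp
  then show "slice (badset d bs \<omega> E N \<delta>) j \<theta> \<in> sets lebesgue" by simp
  define I where "I n = {sqrt (max (c n) 0) - sqrt \<delta> - a n <..< sqrt (max (c n) 0) + sqrt \<delta> - a n}
             \<union> {- sqrt (max (c n) 0) - sqrt \<delta> - a n <..< - sqrt (max (c n) 0) + sqrt \<delta> - a n}" for n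
  have sub: "slice (badset d bs \<omega> E N \<delta>) j \<theta> \<subseteq> (\<Union>n\<in>?C. I n)"
    unfolding eq I_def using quad_set[OF dpos] by blast
  have Isets: "I n \<in> sets lborel" for n unfolding I_def by simp
  have Imeas: "emeasure lborel (I n) \<le> ennreal (4 * sqrt \<delta>)" for n
  proof -
    have "emeasure lborel (I n) \<le> ennreal (2 * sqrt \<delta>) + ennreal (2 * sqrt \<delta>)"
      unfolding I_def
    proof (rule order_trans[OF emeasure_subadditive], simp, simp, rule add_mono)
      fix l :: real
      have "emeasure lborel {l - sqrt \<delta> <..< l + sqrt \<delta>} = ennreal (2 * sqrt \<delta>)"
        using dpos by (subst emeasure_lborel_Ioo) auto
      then show "emeasure lborel {l - sqrt \<delta> - a n <..< l + sqrt \<delta> - a n} \<le> ennreal (2 * sqrt \<delta>)"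
        using dpos by (subst emeasure_lborel_Ioo) auto
      show "emeasure lborel {- l - sqrt \<delta> - a n <..< - l + sqrt \<delta> - a n} \<le> ennreal (2 * sqrt \<delta>)"
        using dpos by (subst emeasure_lborel_Ioo) auto
    qed
    also have "\<dots> = ennreal (4 * sqrt \<delta>)" using dpos by (subst ennreal_plus[symmetric]) auto
    finally show ?thesis .
  qed
  have "emeasure lebesgue (slice (badset d bs \<omega> E N \<delta>) j \<theta>) = emeasure lborel (slice (badset d bs \<omega> E N \<delta>) j \<theta>)"
    using bor by simp
  also have "\<dots> \<le> emeasure lborel (\<Union>n\<in>?C. I n)"
    using Isets sub by (intro emeasure_mono) (auto intro!: sets.finite_UN cube_card(1))
  also have "\<dots> \<le> (\<Sum>n\<in>?C. emeasure lborel (I n))"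
    using Isets cube_card(1) by (intro emeasure_subadditive_finite) auto
  also have "\<dots> \<le> (\<Sum>n\<in>?C. ennreal (4 * sqrt \<delta>))" using Imeas by (intro sum_mono) auto
  also have "\<dots> = ennreal (real (card ?C) * (4 * sqrt \<delta>))"
    using dpos by (subst sum_ennreal) auto
  finally show "emeasure lebesgue (slice (badset d bs \<omega> E N \<delta>) j \<theta>)
           \<le> ennreal (real (card (cube d bs N)) * (4 * sqrt \<delta>))" .
qed


lemma opnorm_bound:
  assumes fin: "finite Q" and g: "g \<ge> 0" and G: "\<forall>n\<in>Q. \<forall>m\<in>Q. cmod (G n m) \<le> g"
  shows "opnorm Q G \<le> real (card Q) ^ 2 * g"
  unfolding opnorm_def
proof (rule cSUP_least)
  show "{u. l2norm Q u \<le> 1} \<noteq> {}"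
  proof -
    have "(\<lambda>_. 0) \<in> {u. l2norm Q u \<le> 1}" by (simp add: l2norm_def)
    then show ?thesis by blast
  qed
  fix u assume "u \<in> {u. l2norm Q u \<le> 1}"
  then have "sqrt (\<Sum>m\<in>Q. (cmod (u m))\<^sup>2) \<le> 1" by (simp add: l2norm_def)
  then have s1: "(\<Sum>m\<in>Q. (cmod (u m))\<^sup>2) \<le> 1" by simp
  have u1: "cmod (u m) \<le> 1" if m: "m \<in> Q" for m
  proof -
    have "(cmod (u m))\<^sup>2 \<le> (\<Sum>m\<in>Q. (cmod (u m))\<^sup>2)"
      using fin m by (intro member_le_sum) auto
    with s1 have "(cmod (u m))\<^sup>2 \<le> 1\<^sup>2" by simp
    then show ?thesis by (simp add: power_le_one_iff abs_le_square_iff)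
  qed
  let ?K = "real (card Q)"
  have vb: "cmod (\<Sum>m\<in>Q. G n m * u m) \<le> ?K * g" if n: "n \<in> Q" for n
  proof -
    have "cmod (\<Sum>m\<in>Q. G n m * u m) \<le> (\<Sum>m\<in>Q. cmod (G n m) * cmod (u m))"
      by (rule order_trans[OF norm_sum]) (simp add: norm_mult)
    also have "\<dots> \<le> (\<Sum>m\<in>Q. g)"
    proof (rule sum_mono)
      fix m assume m: "m \<in> Q"
      have "cmod (G n m) * cmod (u m) \<le> g * 1"
        using G n m u1[OF m] g by (intro mult_mono) auto
      then show "cmod (G n m) * cmod (u m) \<le> g" by simp
    qed
    also have "\<dots> = ?K * g" by simp
    finally show ?thesis .
  qed
  have "(\<Sum>n\<in>Q. (cmod (\<Sum>m\<in>Q. G n m * u m))\<^sup>2) \<le> (\<Sum>n\<in>Q. (?K * g)\<^sup>2)"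
    using vb by (intro sum_mono power_mono) auto
  also have "\<dots> = ?K * (?K * g)\<^sup>2" by simp
  also have "\<dots> \<le> (?K ^ 2 * g)\<^sup>2"
  proof (cases "card Q = 0")
    case True then show ?thesis by simp
  next
    case False
    then have "?K \<ge> 1" by simp
    then have "?K * (?K * g)\<^sup>2 \<le> ?K * ?K * (?K * g)\<^sup>2" by (intro mult_right_mono) auto
    then show ?thesis by (simp add: power2_eq_square algebra_simps)
  qed
  finally have "l2norm Q (\<lambda>n. \<Sum>m\<in>Q. G n m * u m) \<le> sqrt ((?K ^ 2 * g)\<^sup>2)"
    unfolding l2norm_def by (rule real_sqrt_le_mono)
  then show "l2norm Q (\<lambda>n. \<Sum>m\<in>Q. G n m * u m) \<le> ?K ^ 2 * g" using g by simp
qed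


lemma hmat_eq: "hmat d bs Vh \<epsilon> \<omega> \<theta> E n k =
   complex_of_real \<epsilon> * Vh (lat_diff n k) + (if n = k then complex_of_real (Dn d bs \<omega> E \<theta> n) else 0)"
  unfolding hmat_def Dn_def by simp

lemma region_bounds:
  assumes ne: "idx d bs \<noteq> {}" and QL: "Q \<subseteq> Defs.lattice d bs" and fin: "finite Q"
    and adm: "admissible_V d bs \<rho> Vh" and rho: "0 < \<rho>" and eps: "\<epsilon> \<ge> 0" and dpos: "\<delta> > 0"
    and dg: "\<forall>n\<in>Q. \<delta> \<le> \<bar>Dn d bs \<omega> E \<theta> n\<bar>"
    and small: "\<epsilon> * real (card Q) \<le> \<delta> / 2"
    and dec: "2 * \<epsilon> * real (card Q) \<le> \<delta>\<^sup>2"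
    and opn: "real (card Q) ^ 2 * (2 / \<delta>) \<le> R"
  shows "invertible_on Q (hmat d bs Vh \<epsilon> \<omega> \<theta> E) \<and>
         opnorm Q (green d bs Vh \<epsilon> \<omega> Q E \<theta>) \<le> R \<and>
         (\<forall>n\<in>Q. \<forall>n'\<in>Q. supnorm d bs (lat_diff n n') \<noteq> 0 \<longrightarrow>
            cmod (green d bs Vh \<epsilon> \<omega> Q E \<theta> n n') \<le>
              exp (- (4 * \<rho> / 5) * real_of_int (supnorm d bs (lat_diff n n'))))"
proof (cases "Q = {}")
  case True
  have inv: "invertible_on Q (hmat d bs Vh \<epsilon> \<omega> \<theta> E)"
    unfolding invertible_on_def is_inverse_on_def True by simp
  have "opnorm Q (green d bs Vh \<epsilon> \<omega> Q E \<theta>) = 0"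
    unfolding opnorm_def l2norm_def True by simp
  moreover have "0 \<le> R" using opn True by simp
  ultimately show ?thesis using inv True by simp
next
  case False
  let ?M = "hmat d bs Vh \<epsilon> \<omega> \<theta> E"
  let ?A = "\<lambda>n k. Vh (lat_diff n k)"
  let ?D = "Dn d bs \<omega> E \<theta>"
  let ?K = "real (card Q)"
  have Meq: "?M n k = complex_of_real \<epsilon> * ?A n k + (if n = k then complex_of_real (?D n) else 0)" for n k
    by (rule hmat_eq)
  have Vb: "cmod (?A n k) \<le> exp (- \<rho> * real_of_int (supnorm d bs (lat_diff n k)))" if "n \<in> Q" "k \<in> Q" for n k
    using adm lat_diff_lattice[of n d bs k] QL that unfolding admissible_V_def by auto
  have Vb1: "cmod (?A n k) \<le> 1" if "n \<in> Q" "k \<in> Q" for n k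
  proof -
    have "- \<rho> * real_of_int (supnorm d bs (lat_diff n k)) \<le> 0"
      using rho supnorm_nonneg[OF ne] by (simp add: mult_nonneg_nonneg)
    then show ?thesis using Vb[OF that] by (meson exp_le_one_iff order_trans)
  qed
  have inv: "invertible_on Q ?M"
  proof (rule invertible_from_inj[OF fin])
    fix x assume h: "\<forall>n\<in>Q. (\<Sum>k\<in>Q. ?M n k * x k) = 0"
    have "\<forall>n\<in>Q. 1 * cmod (x n) \<le> 2 * 0 / \<delta>"
      by (rule gen_bound(1)[OF fin False dpos eps small dg, where w="\<lambda>_. 1" and A="?A" and z="\<lambda>_. 0"])
         (use Vb1 h Meq in auto)
    then show "\<forall>n\<in>Q. x n = 0" by auto
  qed
  define G where "G = green d bs Vh \<epsilon> \<omega> Q E \<theta>"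
  have isG: "is_inverse_on Q ?M G"
    using inv unfolding invertible_on_def G_def green_def inv_on_def by (rule someI_ex)
  have right: "\<forall>n\<in>Q. (\<Sum>k\<in>Q. ?M n k * G k m) = (if n = m then 1 else 0)" if "m \<in> Q" for m
    using isG that unfolding is_inverse_on_def by auto
  define \<alpha> where "\<alpha> = 4 * \<rho> / 5"
  have col: "cmod (G n m) \<le> 2 / \<delta> \<and>
      (supnorm d bs (lat_diff n m) \<noteq> 0 \<longrightarrow> cmod (G n m) \<le> exp (- \<alpha> * real_of_int (supnorm d bs (lat_diff n m))))"
    if n: "n \<in> Q" and m: "m \<in> Q" for n m
  proof -
    define w where "w k = exp (\<alpha> * real_of_int (supnorm d bs (lat_diff k m)))" for k
    have w1: "w k \<ge> 1" for k unfolding w_def using supnorm_nonneg[OF ne] rho \<alpha>_def by simp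
    have wm: "w m = 1" unfolding w_def using supnorm_self[OF ne] by simp
    have wA: "w a * cmod (?A a k) \<le> w k" if a: "a \<in> Q" and k: "k \<in> Q" for a k
    proof -
      let ?s = "real_of_int (supnorm d bs (lat_diff a k))"
      have "w a \<le> exp (\<alpha> * ?s) * w k"
        unfolding w_def exp_add[symmetric] using supnorm_tri[OF ne, of a m k] rho \<alpha>_def
        by (simp add: distrib_left[symmetric])
      then have "w a * cmod (?A a k) \<le> exp (\<alpha> * ?s) * w k * exp (- \<rho> * ?s)"
        using Vb[OF a k] w1[of k] by (intro mult_mono) auto
      also have "\<dots> = exp ((\<alpha> - \<rho>) * ?s) * w k" by (simp add: exp_add[symmetric] algebra_simps)
      also have "\<dots> \<le> 1 * w k"
        using supnorm_nonneg[OF ne, of "lat_diff a k"] rho \<alpha>_def w1[of k]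
        by (intro mult_right_mono) (auto simp: mult_nonpos_nonneg)
      finally show ?thesis by simp
    qed
    let ?z = "\<lambda>k. if k = m then (1::complex) else 0"
    have wz: "\<forall>k\<in>Q. w k * cmod (?z k) \<le> 1" using wm by auto
    have eq: "\<forall>k\<in>Q. (\<Sum>j\<in>Q. (complex_of_real \<epsilon> * ?A k j + (if k = j then complex_of_real (?D k) else 0)) * G j m) = ?z k"
      using right[OF m] Meq by simp
    have wpos: "\<forall>k\<in>Q. w k \<ge> 0" using w1 by (meson order_trans zero_le_one)
    note gb = gen_bound[OF fin False dpos eps small dg wpos _ wz eq]
    have b1: "w n * cmod (G n m) \<le> 2 * 1 / \<delta>" using gb(1) wA n by auto
    have b2: "\<delta> * (w n * cmod (G n m)) \<le> w n * cmod (?z n) + \<epsilon> * ?K * (2 * 1 / \<delta>)"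
      using gb(2) wA n by auto
    have g1: "cmod (G n m) \<le> 2 / \<delta>"
    proof -
      have "cmod (G n m) \<le> w n * cmod (G n m)" using w1[of n] by (simp add: mult_le_cancel_right1)
      then show ?thesis using b1 by simp
    qed
    have g2: "cmod (G n m) \<le> exp (- \<alpha> * real_of_int (supnorm d bs (lat_diff n m)))"
      if sn: "supnorm d bs (lat_diff n m) \<noteq> 0"
    proof -
      have "n \<noteq> m" using lat_diff_eq0[OF ne sn] .
      then have "\<delta> * (w n * cmod (G n m)) \<le> \<epsilon> * ?K * (2 / \<delta>)" using b2 by simp
      also have "\<dots> = (2 * \<epsilon> * ?K) / \<delta>" by simp
      also have "\<dots> \<le> \<delta>\<^sup>2 / \<delta>" using dec dpos by (intro divide_right_mono) auto
      also have "\<dots> = \<delta> * 1" using dpos by (simp add: power2_eq_square)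
      finally have "w n * cmod (G n m) \<le> 1" using dpos by (simp only: mult_le_cancel_left_pos)
      then have "cmod (G n m) \<le> 1 / w n" using w1[of n] by (simp add: field_simps)
      also have "1 / w n = exp (- \<alpha> * real_of_int (supnorm d bs (lat_diff n m)))"
        unfolding w_def by (simp add: exp_minus field_simps)
      finally show ?thesis .
    qed
    show ?thesis using g1 g2 by blast
  qed
  have "opnorm Q G \<le> ?K ^ 2 * (2 / \<delta>)"
    by (rule opnorm_bound[OF fin]) (use dpos col in auto)
  then have "opnorm Q G \<le> R" using opn by simp
  then show ?thesis using inv col unfolding G_def \<alpha>_def by blast
qed


theorem proposition3p3:
  fixes d :: nat and bs :: "nat \<Rightarrow> nat" and \<rho> c\<^sub>1 :: real
  assumes "d \<ge> 1"
    and "\<forall>i<d. bs i \<ge> 1"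
    and "(\<Sum>i<d. bs i) > d"
    and "0 < \<rho>" and "\<rho> < 1"
    and "0 < c\<^sub>1" and "c\<^sub>1 < 1/4"
  shows "\<exists>N\<^sub>0 > (0::real). \<forall>Vh. admissible_V d bs \<rho> Vh \<longrightarrow>
    (\<forall>\<epsilon> N E \<omega>. 0 < \<epsilon> \<and> \<epsilon> < 1 \<and> N\<^sub>0 \<le> real N \<and>
        real N \<le> \<bar>ln \<epsilon>\<bar> powr (1 / (2 * c\<^sub>1)) \<and>
        (\<forall>p\<in>idx d bs. 0 \<le> \<omega> p \<and> \<omega> p \<le> 2 * pi) \<longrightarrow>
      (\<exists>X \<subseteq> Rd d.
        (\<forall>j<d. \<forall>\<theta>\<in>Rd d. slice X j \<theta> \<in> sets lebesgue \<and>
            emeasure lebesgue (slice X j \<theta>) \<le> ennreal (exp (- (real N powr c\<^sub>1)))) \<and>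
        (\<forall>\<theta>\<in>Rd d - X. \<forall>Q\<in>elem_regions d bs N.
            invertible_on Q (hmat d bs Vh \<epsilon> \<omega> \<theta> E) \<and>
            opnorm Q (green d bs Vh \<epsilon> \<omega> Q E \<theta>) \<le> exp (sqrt (real N)) \<and>
            (\<forall>n\<in>Q. \<forall>n'\<in>Q. real N / 10 \<le> real_of_int (supnorm d bs (lat_diff n n')) \<longrightarrow>
               cmod (green d bs Vh \<epsilon> \<omega> Q E \<theta> n n') \<le>
                 exp (- (4 * \<rho> / 5) * real_of_int (supnorm d bs (lat_diff n n')))))))"
proof -
  let ?B = "card (idx d bs)"
  have ne: "idx d bs \<noteq> {}" using assms(1,2) by (intro idx_ne) auto
  obtain N0 where N0pos: "N0 > 0"
    and N0: "\<forall>x\<ge>N0. ln 4 + 2 * real ?B * ln (2*x+1) \<le> x powr c\<^sub>1 / 2 \<and> 20 \<le> x powr c\<^sub>1"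
    using asymp_N0[OF assms(6)] by blast
  show ?thesis
  proof (intro exI[of _ N0] conjI allI impI)
    show "N0 > 0" by (rule N0pos)
    fix Vh assume adm: "admissible_V d bs \<rho> Vh"
    fix \<epsilon> N E \<omega>
    assume H: "0 < \<epsilon> \<and> \<epsilon> < 1 \<and> N0 \<le> real N \<and>
        real N \<le> \<bar>ln \<epsilon>\<bar> powr (1 / (2 * c\<^sub>1)) \<and>
        (\<forall>p\<in>idx d bs. 0 \<le> \<omega> p \<and> \<omega> p \<le> 2 * pi)"
    define y where "y = real N powr c\<^sub>1"
    have "real N > 0" using H N0pos by linarith
    then have N1: "real N \<ge> 1" by simp
    define L where "L = ln (2 * real N + 1)"
    have L0: "L \<ge> 0" unfolding L_def by simp
    have hy1: "ln 4 + 2 * real ?B * L \<le> y / 2" and hy2: "20 \<le> y"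
      using N0 H unfolding y_def L_def by auto
    have y2: "y\<^sup>2 = real N powr (2 * c\<^sub>1)"
      unfolding y_def by (simp add: power2_eq_square powr_add[symmetric])
    have eps: "\<epsilon> \<le> exp (- y\<^sup>2)"
    proof -
      have le: "ln \<epsilon> < 0" using H by simp
      then have ab: "\<bar>ln \<epsilon>\<bar> = - ln \<epsilon>" by simp
      have "real N \<le> (- ln \<epsilon>) powr (1 / (2 * c\<^sub>1))" using H unfolding ab by blast
      then have "real N powr (2 * c\<^sub>1) \<le> ((- ln \<epsilon>) powr (1 / (2 * c\<^sub>1))) powr (2 * c\<^sub>1)"
        using assms(6) by (intro powr_mono2) auto
      also have "\<dots> = - ln \<epsilon>" using le assms(6) by (simp add: powr_powr)
      finally have "ln \<epsilon> \<le> - y\<^sup>2" using y2 by simp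
      then have "exp (ln \<epsilon>) \<le> exp (- y\<^sup>2)" by simp
      then show ?thesis using H by simp
    qed
    have ysq: "y\<^sup>2 \<le> sqrt (real N)"
    proof -
      have "real N powr (2 * c\<^sub>1) \<le> real N powr (1/2)"
        using N1 assms(7) by (intro powr_mono) auto
      then show ?thesis using y2 by (simp add: powr_half_sqrt)
    qed
    have yy: "20 * y \<le> y\<^sup>2" using hy2 by (simp add: power2_eq_square)
    define \<delta> where "\<delta> = exp (- 3 * y)"
    have dpos: "\<delta> > 0" unfolding \<delta>_def by simp
    define KC where "KC = real (card (cube d bs N))"
    have KC0: "KC \<ge> 0" unfolding KC_def by simp
    have KCb: "KC \<le> exp (real ?B * L)"
    proof -
      have "KC \<le> (2 * real N + 1) ^ ?B" unfolding KC_def by (rule cube_card(2))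
      also have "\<dots> = exp (ln ((2 * real N + 1) ^ ?B))" by simp
      also have "\<dots> = exp (real ?B * L)" unfolding L_def by (subst ln_realpow) auto
      finally show ?thesis .
    qed
    have h4K: "4 * KC \<le> exp (y / 2)"
    proof -
      have "4 * KC \<le> exp (ln 4) * exp (real ?B * L)" using KCb by simp
      also have "\<dots> = exp (ln 4 + real ?B * L)" by (simp add: exp_add)
      also have "\<dots> \<le> exp (y / 2)"
      proof -
        have "0 \<le> real ?B * L" using L0 by simp
        then show ?thesis using hy1 by simp
      qed
      finally show ?thesis .
    qed
    have h2K2: "2 * KC\<^sup>2 \<le> exp (y / 2)"
    proof -
      have "KC\<^sup>2 \<le> (exp (real ?B * L))\<^sup>2" using KCb KC0 by (intro power_mono) auto
      also have "\<dots> = exp (2 * real ?B * L)" by (simp add: power2_eq_square exp_add[symmetric])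
      finally have k2: "KC\<^sup>2 \<le> exp (2 * real ?B * L)" .
      have "2 * KC\<^sup>2 \<le> 4 * exp (2 * real ?B * L)" using k2 exp_gt_zero[of "2 * real ?B * L"] by linarith
      then have "2 * KC\<^sup>2 \<le> exp (ln 4) * exp (2 * real ?B * L)" by simp
      also have "\<dots> = exp (ln 4 + 2 * real ?B * L)" by (simp add: exp_add)
      also have "\<dots> \<le> exp (y / 2)" using hy1 by simp
      finally show ?thesis .
    qed
    define X where "X = badset d bs \<omega> E N \<delta>"
    show "\<exists>X \<subseteq> Rd d.
        (\<forall>j<d. \<forall>\<theta>\<in>Rd d. slice X j \<theta> \<in> sets lebesgue \<and>
            emeasure lebesgue (slice X j \<theta>) \<le> ennreal (exp (- (real N powr c\<^sub>1)))) \<and>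
        (\<forall>\<theta>\<in>Rd d - X. \<forall>Q\<in>elem_regions d bs N.
            invertible_on Q (hmat d bs Vh \<epsilon> \<omega> \<theta> E) \<and>
            opnorm Q (green d bs Vh \<epsilon> \<omega> Q E \<theta>) \<le> exp (sqrt (real N)) \<and>
            (\<forall>n\<in>Q. \<forall>n'\<in>Q. real N / 10 \<le> real_of_int (supnorm d bs (lat_diff n n')) \<longrightarrow>
               cmod (green d bs Vh \<epsilon> \<omega> Q E \<theta> n n') \<le>
                 exp (- (4 * \<rho> / 5) * real_of_int (supnorm d bs (lat_diff n n')))))"
    proof (intro exI[of _ X] conjI allI impI ballI)
      show "X \<subseteq> Rd d" unfolding X_def badset_def by auto
      fix j \<theta> assume j: "j < d" and th: "\<theta> \<in> Rd d"
      show "slice X j \<theta> \<in> sets lebesgue" unfolding X_def by (rule slice_bad(1)[OF dpos j th])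
      have sq: "sqrt \<delta> = exp (- 3 * y / 2)"
      proof -
        have "\<delta> = (exp (- 3 * y / 2))\<^sup>2" unfolding \<delta>_def by (simp add: power2_eq_square exp_add[symmetric])
        then show ?thesis by simp
      qed
      have "KC * (4 * sqrt \<delta>) = (4 * KC) * exp (- 3 * y / 2)" using sq by simp
      also have "\<dots> \<le> exp (y / 2) * exp (- 3 * y / 2)" using h4K by (intro mult_right_mono) auto
      also have "\<dots> = exp (- y)" by (simp add: exp_add[symmetric])
      finally have "KC * (4 * sqrt \<delta>) \<le> exp (- (real N powr c\<^sub>1))" unfolding y_def .
      then show "emeasure lebesgue (slice X j \<theta>) \<le> ennreal (exp (- (real N powr c\<^sub>1)))"
        unfolding X_def using slice_bad(2)[OF dpos j th, of bs \<omega> E N] KC_def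
        by (meson ennreal_leI order_trans)
    next
      fix \<theta> Q assume th: "\<theta> \<in> Rd d - X" and Q: "Q \<in> elem_regions d bs N"
      have Qc: "Q \<subseteq> cube d bs N" by (rule elem_sub_cube[OF Q])
      have QL: "Q \<subseteq> Defs.lattice d bs" using Qc unfolding cube_def by auto
      have fin: "finite Q" using Qc cube_card(1) finite_subset by blast
      have KQ: "real (card Q) \<le> KC" unfolding KC_def using card_mono[OF cube_card(1) Qc] by simp
      define K where "K = real (card Q)"
      have K0: "K \<ge> 0" unfolding K_def by simp
      have dg: "\<forall>n\<in>Q. \<delta> \<le> \<bar>Dn d bs \<omega> E \<theta> n\<bar>"
        using th Qc unfolding X_def badset_def by force
      have eK: "\<epsilon> * K \<le> exp (- y\<^sup>2) * KC" using eps KQ K0 H unfolding K_def by (intro mult_mono) auto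
      have h2K: "2 * KC \<le> exp (y / 2)" using h4K KC0 by linarith
      have small: "\<epsilon> * K \<le> \<delta> / 2"
      proof -
        have "2 * (\<epsilon> * K) \<le> exp (- y\<^sup>2) * (2 * KC)" using eK by simp
        also have "\<dots> \<le> exp (- y\<^sup>2) * exp (y / 2)" using h2K by (intro mult_left_mono) auto
        also have "\<dots> = exp (y / 2 - y\<^sup>2)" by (simp add: exp_add[symmetric])
        also have "\<dots> \<le> \<delta>" unfolding \<delta>_def using yy hy2 by simp
        finally show ?thesis by simp
      qed
      have dec: "2 * \<epsilon> * K \<le> \<delta>\<^sup>2"
      proof -
        have "2 * \<epsilon> * K \<le> exp (- y\<^sup>2) * (2 * KC)" using eK by simp
        also have "\<dots> \<le> exp (- y\<^sup>2) * exp (y / 2)" using h2K by (intro mult_left_mono) auto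
        also have "\<dots> = exp (y / 2 - y\<^sup>2)" by (simp add: exp_add[symmetric])
        also have "\<dots> \<le> exp (- 6 * y)" using yy hy2 by simp
        also have "\<dots> = \<delta>\<^sup>2" unfolding \<delta>_def by (simp add: power2_eq_square exp_add[symmetric])
        finally show ?thesis .
      qed
      have opn: "K ^ 2 * (2 / \<delta>) \<le> exp (sqrt (real N))"
      proof -
        have "K ^ 2 \<le> KC ^ 2" using KQ K0 unfolding K_def by (intro power_mono) auto
        then have "K ^ 2 * (2 / \<delta>) \<le> (2 * KC ^ 2) * exp (3 * y)"
          unfolding \<delta>_def by (simp add: exp_minus field_simps)
        also have "\<dots> \<le> exp (y / 2) * exp (3 * y)" using h2K2 by (intro mult_right_mono) auto
        also have "\<dots> = exp (y / 2 + 3 * y)" by (simp only: exp_add)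
        also have "\<dots> \<le> exp (y\<^sup>2)" using yy hy2 by simp
        also have "\<dots> \<le> exp (sqrt (real N))" using ysq by simp
        finally show ?thesis .
      qed
      have e0: "0 \<le> \<epsilon>" using H by simp
      have R: "invertible_on Q (hmat d bs Vh \<epsilon> \<omega> \<theta> E) \<and>
         opnorm Q (green d bs Vh \<epsilon> \<omega> Q E \<theta>) \<le> exp (sqrt (real N)) \<and>
         (\<forall>n\<in>Q. \<forall>n'\<in>Q. supnorm d bs (lat_diff n n') \<noteq> 0 \<longrightarrow>
            cmod (green d bs Vh \<epsilon> \<omega> Q E \<theta> n n') \<le>
              exp (- (4 * \<rho> / 5) * real_of_int (supnorm d bs (lat_diff n n'))))"
        using region_bounds[OF ne QL fin adm assms(4) e0 dpos dg small[unfolded K_def]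
            dec[unfolded K_def] opn[unfolded K_def]] .
      show "invertible_on Q (hmat d bs Vh \<epsilon> \<omega> \<theta> E)" using R by blast
      show "opnorm Q (green d bs Vh \<epsilon> \<omega> Q E \<theta>) \<le> exp (sqrt (real N))" using R by blast
      fix n n' assume n: "n \<in> Q" and n': "n' \<in> Q"
        and s: "real N / 10 \<le> real_of_int (supnorm d bs (lat_diff n n'))"
      have "supnorm d bs (lat_diff n n') \<noteq> 0" using s N1 by auto
      then show "cmod (green d bs Vh \<epsilon> \<omega> Q E \<theta> n n') \<le>
                 exp (- (4 * \<rho> / 5) * real_of_int (supnorm d bs (lat_diff n n')))"
        using R n n' by blast
    qed
  qed
qed

end
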